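(* Let $\mathcal{I}=\{(m,n)\in\mathbb{N}^2: m\le n\}$ and let $C=[0,1]^{\mathcal{I}}$ be the unit cube in the space $(\ell^\infty(\mathcal{I}),\|\cdot\|_\infty)$. Then there exist a non-expansive map $T:C\to C$ (i.e. $\|Tx-Ty\|_\infty\le\|x-y\|_\infty$ for all $x,y\in C$), points $x^0,y^0\in C$, and a sequence $(x^n)_{n\in\mathbb{N}}$ in $C$ satisfying, with the convention $Tx^{-1}=y^0$, $$x^n=\sum_{i=0}^n\pi^n_i\,Tx^{i-1}\quad\text{for all }n\ge1,$$ such that $\|x^m-x^n\|_\infty=d_{m,n}$ for all $m,n\in\mathbb{N}$. Moreover, if in addition condition (H) holds, then this sequence also satisfies $\|x^n-Tx^n\|_\infty=R_n:=\sum_{i=0}^n\pi^n_i\,d_{i-1,n}$ for all $n\in\mathbb{N}$.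
   Context: Let $\mathbb{N}=\{0,1,2,\dots\}$. Fix a sequence $(\pi^n)_{n\in\mathbb{N}}$ where each $\pi^n=(\pi^n_i)_{i\in\mathbb{N}}$ is a probability distribution on $\mathbb{N}$ with support contained in $\{0,\dots,n\}$, and $\pi^n\ne\pi^m$ for $m\ne n$. Define reals $d_{m,n}$ for $m,n\in\mathbb{N}\cup\{-1\}$ recursively as follows: $d_{-1,-1}=0$, $d_{-1,j}=d_{j,-1}=1$ for $j\in\mathbb{N}$, and for $m,n\in\mathbb{N}$, $$d_{m,n}=\min_{z\in\mathcal{F}_{m,n}}\sum_{i=0}^m\sum_{j=0}^n z_{i,j}\,d_{i-1,j-1},$$ where $\mathcal{F}_{m,n}$ is the set of arrays $z=(z_{i,j})_{0\le i\le m,\,0\le j\le n}$ with $z_{i,j}\ge0$, $\sum_{j=0}^n z_{i,j}=\pi^m_i$ for all $i\le m$, and $\sum_{i=0}^m z_{i,j}=\pi^n_j$ for all $j\le n$. Condition (H) means: for every $n\ge1$, $\pi^n_n>0$ and $0\le\pi^n_i\le\pi^{n-1}_i$ for all $i<n$. *)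

theory Defs
  imports "HOL-Analysis.Analysis"
begin

(* Probability distributions are functions  P n i  (= \<P>^n_i).  *)

definition plans :: "(nat \<Rightarrow> nat \<Rightarrow> real) \<Rightarrow> nat \<Rightarrow> nat \<Rightarrow> (nat \<Rightarrow> nat \<Rightarrow> real) set" where
  "plans P m n = {z. (\<forall>i\<le>m. \<forall>j\<le>n. 0 \<le> z i j)
                    \<and> (\<forall>i\<le>m. (\<Sum>j\<le>n. z i j) = P m i)
                    \<and> (\<forall>j\<le>n. (\<Sum>i\<le>m. z i j) = P n j)}"

(* Shifted distances: dd P a b = d_{a-1,b-1}. *)
function dd :: "(nat \<Rightarrow> nat \<Rightarrow> real) \<Rightarrow> nat \<Rightarrow> nat \<Rightarrow> real" where
  "dd P 0 0 = 0"
| "dd P 0 (Suc j) = 1"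
| "dd P (Suc j) 0 = 1"
| "dd P (Suc m) (Suc n) =
     Inf ((\<lambda>z. \<Sum>i\<le>m. \<Sum>j\<le>n. z i j * dd P i j) ` plans P m n)"
  by pat_completeness auto
termination
  apply (relation "Wellfounded.measure (\<lambda>(P,a,b). a+b)")
  apply auto
  done

(* d_{m,n} for m, n \<in> \<nat> \<union> {-1}, indexed by integers \<ge> -1. *)
definition d :: "(nat \<Rightarrow> nat \<Rightarrow> real) \<Rightarrow> int \<Rightarrow> int \<Rightarrow> real" where
  "d P m n = dd P (nat (m + 1)) (nat (n + 1))"

definition Iset :: "(nat \<times> nat) set" where
  "Iset = {(m,n). m \<le> n}"

definition cube :: "(nat \<times> nat \<Rightarrow> real) set" where
  "cube = {x. (\<forall>p\<in>Iset. 0 \<le> x p \<and> x p \<le> 1) \<and> (\<forall>p. p \<notin> Iset \<longrightarrow> x p = 0)}"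

definition linf_dist :: "(nat \<times> nat \<Rightarrow> real) \<Rightarrow> (nat \<times> nat \<Rightarrow> real) \<Rightarrow> real" where
  "linf_dist x y = (SUP p\<in>Iset. \<bar>x p - y p\<bar>)"

definition is_prob_seq :: "(nat \<Rightarrow> nat \<Rightarrow> real) \<Rightarrow> bool" where
  "is_prob_seq P \<longleftrightarrow> (\<forall>n. (\<forall>i. 0 \<le> P n i) \<and> (\<forall>i>n. P n i = 0) \<and> (\<Sum>i\<le>n. P n i) = 1)
                       \<and> (\<forall>m n. m \<noteq> n \<longrightarrow> P m \<noteq> P n)"

definition condH :: "(nat \<Rightarrow> nat \<Rightarrow> real) \<Rightarrow> bool" where
  "condH P \<longleftrightarrow> (\<forall>n\<ge>1. P n n > 0 \<and> (\<forall>i<n. 0 \<le> P n i \<and> P n i \<le> P (n - 1) i))"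

end

theory Submission
  imports Defs
begin


inductive_set ncone :: "(('v \<Rightarrow> real) \<times> real) set \<Rightarrow> (('v \<Rightarrow> real) \<times> real) set"
  for C :: "(('v \<Rightarrow> real) \<times> real) set" where
  gen: "c \<in> C \<Longrightarrow> c \<in> ncone C"
| add: "c \<in> ncone C \<Longrightarrow> e \<in> ncone C \<Longrightarrow> ((\<lambda>v. fst c v + fst e v), snd c + snd e) \<in> ncone C"
| scale: "c \<in> ncone C \<Longrightarrow> 0 \<le> t \<Longrightarrow> ((\<lambda>v. t * fst c v), t * snd c) \<in> ncone C"

lemma ncone_mono:
  assumes "C' \<subseteq> ncone C" "c \<in> ncone C'"
  shows "c \<in> ncone C"
  using assms(2) by induction (use assms(1) in \<open>auto intro: ncone.intros\<close>)

definition lin :: "'v set \<Rightarrow> ('v \<Rightarrow> real) \<Rightarrow> ('v \<Rightarrow> real) \<Rightarrow> real" where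
  "lin V a x = (\<Sum>v\<in>V. a v * x v)"

lemma farkas:
  fixes V :: "'v set"
  assumes "finite V"
  shows "finite C \<Longrightarrow> (\<forall>c\<in>C. \<forall>v. v \<notin> V \<longrightarrow> fst c v = 0)
    \<Longrightarrow> (\<forall>x. \<exists>c\<in>C. lin V (fst c) x > snd c) \<Longrightarrow> \<exists>b<0. ((\<lambda>_. 0), b) \<in> ncone C"
  using assms
proof (induction V arbitrary: C rule: finite_induct)
  case empty
  then obtain c where c: "c \<in> C" "0 > snd c" by (auto simp: lin_def)
  have "fst c = (\<lambda>_. 0)" using empty(2) c(1) by auto
  then have "((\<lambda>_. 0), snd c) \<in> ncone C" using c(1) ncone.gen by (metis prod.collapse)
  then show ?case using c(2) by auto
next
  case (insert w V)
  define Pp where "Pp = {c\<in>C. fst c w > 0}"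
  define Nn where "Nn = {c\<in>C. fst c w < 0}"
  define Zz where "Zz = {c\<in>C. fst c w = 0}"
  define comb where "comb = (\<lambda>(c::('v \<Rightarrow> real) \<times> real) (d::('v \<Rightarrow> real) \<times> real).
     ((\<lambda>v. (- fst d w) * fst c v + fst c w * fst d v), (- fst d w) * snd c + fst c w * snd d))"
  define C' where "C' = Zz \<union> (\<lambda>(c,d). comb c d) ` (Pp \<times> Nn)"
  have finC: "finite Pp" "finite Nn" "finite Zz" using insert(4) by (auto simp: Pp_def Nn_def Zz_def)
  have fin': "finite C'" using finC by (simp add: C'_def)
  have van': "\<forall>c\<in>C'. \<forall>v. v \<notin> V \<longrightarrow> fst c v = 0"
  proof (intro ballI allI impI)
    fix c v assume c: "c \<in> C'" and v: "v \<notin> V"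
    show "fst c v = 0"
    proof (cases "v = w")
      case True
      then show ?thesis using c by (auto simp: C'_def Zz_def comb_def)
    next
      case False
      then have "v \<notin> insert w V" using v by auto
      then have z: "\<forall>c\<in>C. fst c v = 0" using insert(5) by auto
      from c consider "c \<in> C" | p n where "p \<in> C" "n \<in> C" "c = comb p n"
        unfolding C'_def Zz_def Pp_def Nn_def by auto
      then show ?thesis
      proof cases
        case 1 then show ?thesis using z by auto
      next
        case 2 then show ?thesis using z by (auto simp: comb_def)
      qed
    qed
  qed
  have sub: "C' \<subseteq> ncone C"
  proof
    fix c assume "c \<in> C'"
    then consider "c \<in> Zz" | p n where "p \<in> Pp" "n \<in> Nn" "c = comb p n" unfolding C'_def by auto
    then show "c \<in> ncone C"
    proof cases
      case 1 then show ?thesis by (auto simp: Zz_def intro: ncone.gen)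
    next
      case 2
      have a: "((\<lambda>v. (- fst n w) * fst p v), (- fst n w) * snd p) \<in> ncone C"
        using 2 by (intro ncone.scale ncone.gen) (auto simp: Pp_def Nn_def)
      have b: "((\<lambda>v. fst p w * fst n v), fst p w * snd n) \<in> ncone C"
        using 2 by (intro ncone.scale ncone.gen) (auto simp: Pp_def Nn_def)
      show ?thesis using ncone.add[OF a b] 2(3) by (simp add: comb_def)
    qed
  qed
  have infeas: "\<forall>x. \<exists>c\<in>C'. lin V (fst c) x > snd c"
  proof (rule ccontr)
    assume "\<not> ?thesis"
    then obtain x' where x': "\<forall>c\<in>C'. lin V (fst c) x' \<le> snd c" by (auto simp: not_less)
    define L where "L = (\<lambda>c. (snd c - lin V (fst c) x') / fst c w)"
    have key: "L n \<le> L p" if p: "p \<in> Pp" and n: "n \<in> Nn" for p n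
    proof -
      have "comb p n \<in> C'" using p n by (auto simp: C'_def)
      then have "lin V (fst (comb p n)) x' \<le> snd (comb p n)" using x' by auto
      moreover have "lin V (fst (comb p n)) x' = (- fst n w) * lin V (fst p) x' + fst p w * lin V (fst n) x'"
        by (simp add: comb_def lin_def sum_distrib_left sum.distrib[symmetric] sum_negf[symmetric] algebra_simps)
      ultimately have ineq: "(- fst n w) * lin V (fst p) x' + fst p w * lin V (fst n) x'
          \<le> (- fst n w) * snd p + fst p w * snd n" by (simp add: comb_def)
      have pw: "fst p w > 0" and nw: "fst n w < 0" using p n by (auto simp: Pp_def Nn_def)
      show ?thesis unfolding L_def using ineq pw nw
        by (simp add: divide_simps) (smt (verit) mult.commute right_diff_distrib)
    qed
    define t where "t = (if Nn = {} then (if Pp = {} then 0 else Min (L ` Pp)) else Max (L ` Nn))"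
    have tP: "t \<le> L p" if "p \<in> Pp" for p
    proof (cases "Nn = {}")
      case True then show ?thesis using that finC by (auto simp: t_def)
    next
      case False then show ?thesis using that finC key by (auto simp: t_def Max_le_iff)
    qed
    have tN: "L n \<le> t" if "n \<in> Nn" for n
      using that finC by (auto simp: t_def)
    define x where "x = x'(w := t)"
    have linx: "lin (insert w V) a x = a w * t + lin V a x'" for a
    proof -
      have "lin V a x = lin V a x'" unfolding lin_def x_def using insert(2)
        by (intro sum.cong) auto
      then show ?thesis using insert(1,2) by (simp add: lin_def x_def)
    qed
    have "\<forall>c\<in>C. lin (insert w V) (fst c) x \<le> snd c"
    proof
      fix c assume c: "c \<in> C"
      consider "c \<in> Zz" | "c \<in> Pp" | "c \<in> Nn" using c by (force simp: Zz_def Pp_def Nn_def)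
      then show "lin (insert w V) (fst c) x \<le> snd c"
      proof cases
        case 1 then show ?thesis using x' by (auto simp: linx C'_def Zz_def)
      next
        case 2
        then have cw: "fst c w > 0" by (auto simp: Pp_def)
        have "fst c w * t \<le> fst c w * L c" using tP[OF 2] cw by simp
        also have "fst c w * L c = snd c - lin V (fst c) x'" using cw by (simp add: L_def)
        finally show ?thesis by (simp add: linx)
      next
        case 3
        then have cw: "fst c w < 0" by (auto simp: Nn_def)
        have "fst c w * t \<le> fst c w * L c" using tN[OF 3] cw by (simp add: mult_le_cancel_left)
        also have "fst c w * L c = snd c - lin V (fst c) x'" using cw by (simp add: L_def)
        finally show ?thesis by (simp add: linx)
      qed
    qed
    then show False using insert(6) by (meson not_less)
  qed
  obtain b where "b < 0" "((\<lambda>_. 0), b) \<in> ncone C'" using insert(3)[OF fin' van' infeas] by auto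
  then show ?case using ncone_mono[OF sub] by auto
qed



definition cost :: "(nat \<Rightarrow> nat \<Rightarrow> real) \<Rightarrow> nat \<Rightarrow> nat \<Rightarrow> (nat \<Rightarrow> nat \<Rightarrow> real) \<Rightarrow> real" where
  "cost P m n z = (\<Sum>i\<le>m. \<Sum>j\<le>n. z i j * dd P i j)"

context
  fixes P :: "nat \<Rightarrow> nat \<Rightarrow> real"
  assumes prob: "is_prob_seq P"
begin

lemma P_nonneg: "0 \<le> P n i" using prob by (auto simp: is_prob_seq_def)
lemma P_zero: "n < i \<Longrightarrow> P n i = 0" using prob by (auto simp: is_prob_seq_def)
lemma P_sum: "(\<Sum>i\<le>n. P n i) = 1" using prob by (auto simp: is_prob_seq_def)

lemma prod_plan: "(\<lambda>i j. P m i * P n j) \<in> plans P m n"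
  by (auto simp: plans_def P_nonneg P_sum sum_distrib_left[symmetric] sum_distrib_right[symmetric])

lemma plans_ne: "plans P m n \<noteq> {}" using prod_plan by blast

lemma dd_Suc: "dd P (Suc m) (Suc n) = Inf (cost P m n ` plans P m n)"
  by (simp add: cost_def)

lemma dd_nonneg: "0 \<le> dd P a b"
proof (induction "a + b" arbitrary: a b rule: less_induct)
  case less
  show ?case
  proof (cases a)
    case 0 then show ?thesis by (cases b) auto
  next
    case (Suc m)
    show ?thesis
    proof (cases b)
      case 0 then show ?thesis using Suc by auto
    next
      case (Suc n)
      have "\<forall>z\<in>plans P m n. 0 \<le> cost P m n z"
        unfolding cost_def plans_def
        using less Suc \<open>a = Suc m\<close> by (auto intro!: sum_nonneg mult_nonneg_nonneg)
      then show ?thesis using \<open>a = Suc m\<close> Suc dd_Suc plans_ne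
        by (auto intro!: cInf_greatest)
    qed
  qed
qed

lemma cost_nonneg: "z \<in> plans P m n \<Longrightarrow> 0 \<le> cost P m n z"
  unfolding cost_def plans_def by (auto intro!: sum_nonneg mult_nonneg_nonneg dd_nonneg)

lemma dd_le: "z \<in> plans P m n \<Longrightarrow> dd P (Suc m) (Suc n) \<le> cost P m n z"
  unfolding dd_Suc by (rule cInf_lower) (auto intro!: bdd_belowI[where m=0] cost_nonneg)

lemma dd_ge: "(\<And>z. z \<in> plans P m n \<Longrightarrow> r \<le> cost P m n z) \<Longrightarrow> r \<le> dd P (Suc m) (Suc n)"
  unfolding dd_Suc using plans_ne by (intro cInf_greatest) auto

lemma dd_le1: "dd P a b \<le> 1"
proof (induction "a + b" arbitrary: a b rule: less_induct)
  case less
  show ?case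
  proof (cases a)
    case 0 then show ?thesis by (cases b) auto
  next
    case (Suc m)
    show ?thesis
    proof (cases b)
      case 0 then show ?thesis using Suc by auto
    next
      case (Suc n)
      have "cost P m n (\<lambda>i j. P m i * P n j) \<le> (\<Sum>i\<le>m. \<Sum>j\<le>n. P m i * P n j * 1)"
        unfolding cost_def using less Suc \<open>a = Suc m\<close>
        by (intro sum_mono mult_left_mono) (auto simp: P_nonneg)
      also have "\<dots> = 1" by (simp add: sum_distrib_left[symmetric] sum_distrib_right[symmetric] P_sum)
      finally have "dd P (Suc m) (Suc n) \<le> 1" using dd_le[OF prod_plan, of m n] by linarith
      then show ?thesis using \<open>a = Suc m\<close> Suc by simp
    qed
  qed
qed

lemma dd_refl: "dd P a a = 0"
proof (induction a rule: less_induct)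
  case (less a)
  show ?case
  proof (cases a)
  case 0 then show ?thesis by simp
next
  case (Suc m)
  have pl: "(\<lambda>i j. if i = j then P m i else 0) \<in> plans P m m"
    by (auto simp: plans_def P_nonneg if_distrib cong: if_cong)
  have "cost P m m (\<lambda>i j. if i = j then P m i else 0) = 0"
  proof -
    have "(\<Sum>j\<le>m. (if i = j then P m i else 0) * dd P i j) = 0" if "i \<le> m" for i
    proof -
      have "(\<Sum>j\<le>m. (if i = j then P m i else 0) * dd P i j) = (\<Sum>j\<le>m. if i = j then P m i * dd P i i else 0)"
        by (rule sum.cong) auto
      also have "\<dots> = P m i * dd P i i" using that by (simp add: sum.delta)
      finally show ?thesis using less Suc that by simp
    qed
    then show ?thesis unfolding cost_def by simp
  qed
  then show ?thesis using dd_le[OF pl] dd_nonneg[of "Suc m" "Suc m"] Suc by simp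
qed
qed

lemma plan_transp: "z \<in> plans P n m \<Longrightarrow> (\<lambda>i j. z j i) \<in> plans P m n"
  by (auto simp: plans_def)

lemma dd_sym: "dd P a b = dd P b a"
proof (induction "a + b" arbitrary: a b rule: less_induct)
  case less
  have half: "dd P (Suc m) (Suc n) \<le> dd P (Suc n) (Suc m)" if "a = Suc m" "b = Suc n" for m n
  proof (rule dd_ge)
    fix z assume z: "z \<in> plans P n m"
    have "dd P (Suc m) (Suc n) \<le> cost P m n (\<lambda>i j. z j i)" by (rule dd_le[OF plan_transp[OF z]])
    also have "cost P m n (\<lambda>i j. z j i) = (\<Sum>i\<le>m. \<Sum>j\<le>n. z j i * dd P j i)"
      unfolding cost_def using less that by (intro sum.cong refl) auto
    also have "\<dots> = cost P n m z" unfolding cost_def by (rule sum.swap)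
    finally show "dd P (Suc m) (Suc n) \<le> cost P n m z" .
  qed
  have half2: "dd P (Suc n) (Suc m) \<le> dd P (Suc m) (Suc n)" if "a = Suc m" "b = Suc n" for m n
  proof (rule dd_ge)
    fix z assume z: "z \<in> plans P m n"
    have "dd P (Suc n) (Suc m) \<le> cost P n m (\<lambda>i j. z j i)" by (rule dd_le[OF plan_transp[OF z]])
    also have "cost P n m (\<lambda>i j. z j i) = (\<Sum>i\<le>n. \<Sum>j\<le>m. z j i * dd P j i)"
      unfolding cost_def using less that by (intro sum.cong refl) auto
    also have "\<dots> = cost P m n z" unfolding cost_def by (rule sum.swap)
    finally show "dd P (Suc n) (Suc m) \<le> cost P m n z" .
  qed
  show ?case
  proof (cases a)
    case 0 then show ?thesis by (cases b) auto
  next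
    case (Suc m)
    then show ?thesis using half half2 by (cases b) fastforce+
  qed
qed

lemma glue:
  assumes z1: "z1 \<in> plans P m k" and z2: "z2 \<in> plans P k n"
    and tri: "\<And>i j l. i \<le> m \<Longrightarrow> j \<le> k \<Longrightarrow> l \<le> n \<Longrightarrow> dd P i l \<le> dd P i j + dd P j l"
  shows "dd P (Suc m) (Suc n) \<le> cost P m k z1 + cost P k n z2"
proof -
  define g where "g = (\<lambda>i j l. if P k j = 0 then 0 else z1 i j * z2 j l / P k j)"
  define w where "w = (\<lambda>i l. \<Sum>j\<le>k. g i j l)"
  have z1nn: "\<And>i j. i \<le> m \<Longrightarrow> j \<le> k \<Longrightarrow> 0 \<le> z1 i j" using z1 by (auto simp: plans_def)
  have z2nn: "\<And>j l. j \<le> k \<Longrightarrow> l \<le> n \<Longrightarrow> 0 \<le> z2 j l" using z2 by (auto simp: plans_def)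
  have z1r: "\<And>i. i \<le> m \<Longrightarrow> (\<Sum>j\<le>k. z1 i j) = P m i" using z1 by (auto simp: plans_def)
  have z1c: "\<And>j. j \<le> k \<Longrightarrow> (\<Sum>i\<le>m. z1 i j) = P k j" using z1 by (auto simp: plans_def)
  have z2r: "\<And>j. j \<le> k \<Longrightarrow> (\<Sum>l\<le>n. z2 j l) = P k j" using z2 by (auto simp: plans_def)
  have z2c: "\<And>l. l \<le> n \<Longrightarrow> (\<Sum>j\<le>k. z2 j l) = P n l" using z2 by (auto simp: plans_def)
  have z1z: "z1 i j = 0" if "i \<le> m" "j \<le> k" "P k j = 0" for i j
  proof -
    have "(\<Sum>i\<le>m. z1 i j) = 0" using z1c that by simp
    then show ?thesis using sum_nonneg_eq_0_iff[of "{..m}" "\<lambda>i. z1 i j"] z1nn that by auto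
  qed
  have z2z: "z2 j l = 0" if "l \<le> n" "j \<le> k" "P k j = 0" for j l
  proof -
    have "(\<Sum>l\<le>n. z2 j l) = 0" using z2r that by simp
    then show ?thesis using sum_nonneg_eq_0_iff[of "{..n}" "\<lambda>l. z2 j l"] z2nn that by auto
  qed
  have gnn: "0 \<le> g i j l" if "i \<le> m" "j \<le> k" "l \<le> n" for i j l
    using that z1nn z2nn P_nonneg[of k j] by (auto simp: g_def)
  have gl: "(\<Sum>l\<le>n. g i j l) = z1 i j" if "i \<le> m" "j \<le> k" for i j
  proof (cases "P k j = 0")
    case True then show ?thesis using z1z that by (simp add: g_def)
  next
    case False
    have "(\<Sum>l\<le>n. g i j l) = z1 i j * (\<Sum>l\<le>n. z2 j l) / P k j"
      using False by (simp add: g_def sum_distrib_left sum_divide_distrib)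
    then show ?thesis using False z2r that by simp
  qed
  have gi: "(\<Sum>i\<le>m. g i j l) = z2 j l" if "l \<le> n" "j \<le> k" for j l
  proof (cases "P k j = 0")
    case True then show ?thesis using z2z that by (simp add: g_def)
  next
    case False
    have "(\<Sum>i\<le>m. g i j l) = (\<Sum>i\<le>m. z1 i j) * z2 j l / P k j"
      using False by (simp add: g_def sum_distrib_right sum_divide_distrib)
    then show ?thesis using False z1c that by simp
  qed
  have wplan: "w \<in> plans P m n"
    unfolding plans_def
  proof (intro CollectI conjI allI impI)
    fix i l assume "i \<le> m" "l \<le> n"
    then show "0 \<le> w i l" unfolding w_def by (auto intro!: sum_nonneg gnn)
  next
    fix i assume i: "i \<le> m"
    have "(\<Sum>l\<le>n. w i l) = (\<Sum>j\<le>k. \<Sum>l\<le>n. g i j l)" unfolding w_def by (rule sum.swap)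
    also have "\<dots> = (\<Sum>j\<le>k. z1 i j)" using i gl by simp
    finally show "(\<Sum>l\<le>n. w i l) = P m i" using z1r i by simp
  next
    fix l assume l: "l \<le> n"
    have "(\<Sum>i\<le>m. w i l) = (\<Sum>j\<le>k. \<Sum>i\<le>m. g i j l)" unfolding w_def by (rule sum.swap)
    also have "\<dots> = (\<Sum>j\<le>k. z2 j l)" using l gi by simp
    finally show "(\<Sum>i\<le>m. w i l) = P n l" using z2c l by simp
  qed
  have "cost P m n w = (\<Sum>i\<le>m. \<Sum>l\<le>n. \<Sum>j\<le>k. g i j l * dd P i l)"
    unfolding cost_def w_def by (simp add: sum_distrib_right)
  also have "\<dots> \<le> (\<Sum>i\<le>m. \<Sum>l\<le>n. \<Sum>j\<le>k. g i j l * dd P i j + g i j l * dd P j l)"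
    by (intro sum_mono) (auto simp: distrib_left[symmetric] intro!: mult_left_mono tri gnn)
  also have "\<dots> = (\<Sum>i\<le>m. \<Sum>l\<le>n. \<Sum>j\<le>k. g i j l * dd P i j)
                 + (\<Sum>i\<le>m. \<Sum>l\<le>n. \<Sum>j\<le>k. g i j l * dd P j l)"
    by (simp add: sum.distrib)
  also have "(\<Sum>i\<le>m. \<Sum>l\<le>n. \<Sum>j\<le>k. g i j l * dd P i j) = cost P m k z1"
  proof -
    have "(\<Sum>i\<le>m. \<Sum>l\<le>n. \<Sum>j\<le>k. g i j l * dd P i j) = (\<Sum>i\<le>m. \<Sum>j\<le>k. \<Sum>l\<le>n. g i j l * dd P i j)"
      by (intro sum.cong refl sum.swap)
    also have "\<dots> = (\<Sum>i\<le>m. \<Sum>j\<le>k. (\<Sum>l\<le>n. g i j l) * dd P i j)"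
      by (simp add: sum_distrib_right)
    also have "\<dots> = cost P m k z1" unfolding cost_def using gl by simp
    finally show ?thesis .
  qed
  also have "(\<Sum>i\<le>m. \<Sum>l\<le>n. \<Sum>j\<le>k. g i j l * dd P j l) = cost P k n z2"
  proof -
    have "(\<Sum>i\<le>m. \<Sum>l\<le>n. \<Sum>j\<le>k. g i j l * dd P j l) = (\<Sum>l\<le>n. \<Sum>i\<le>m. \<Sum>j\<le>k. g i j l * dd P j l)"
      by (rule sum.swap)
    also have "\<dots> = (\<Sum>l\<le>n. \<Sum>j\<le>k. \<Sum>i\<le>m. g i j l * dd P j l)"
      by (intro sum.cong refl sum.swap)
    also have "\<dots> = (\<Sum>l\<le>n. \<Sum>j\<le>k. (\<Sum>i\<le>m. g i j l) * dd P j l)"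
      by (simp add: sum_distrib_right)
    also have "\<dots> = (\<Sum>l\<le>n. \<Sum>j\<le>k. z2 j l * dd P j l)" using gi by simp
    also have "\<dots> = cost P k n z2" unfolding cost_def by (rule sum.swap)
    finally show ?thesis .
  qed
  finally show ?thesis using dd_le[OF wplan] by linarith
qed

lemma dd_tri: "dd P a c \<le> dd P a b + dd P b c"
proof (induction "a + b + c" arbitrary: a b c rule: less_induct)
  case less
  show ?case
  proof (cases "a = 0 \<or> b = 0 \<or> c = 0")
    case True
    have h: "dd P 0 (Suc j) = 1" "dd P (Suc j) 0 = 1" for j by simp_all
    show ?thesis
      using True dd_nonneg[of a b] dd_nonneg[of b c] dd_le1[of a c]
      by (cases a; cases b; cases c) auto
  next
    case False
    then obtain m k n where abc: "a = Suc m" "b = Suc k" "c = Suc n" by (meson not0_implies_Suc)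
    have tri: "dd P i l \<le> dd P i j + dd P j l" if "i \<le> m" "j \<le> k" "l \<le> n" for i j l
      using less abc that by simp
    have "dd P (Suc m) (Suc n) - dd P (Suc m) (Suc k) \<le> cost P k n z2" if z2: "z2 \<in> plans P k n" for z2
    proof -
      have "dd P (Suc m) (Suc n) - cost P k n z2 \<le> dd P (Suc m) (Suc k)"
      proof (rule dd_ge)
        fix z1 assume z1: "z1 \<in> plans P m k"
        show "dd P (Suc m) (Suc n) - cost P k n z2 \<le> cost P m k z1"
          using glue[OF z1 z2 tri] by linarith
      qed
      then show ?thesis by linarith
    qed
    then have "dd P (Suc m) (Suc n) - dd P (Suc m) (Suc k) \<le> dd P (Suc k) (Suc n)"
      by (intro dd_ge)
    then show ?thesis using abc by simp
  qed
qed

end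


context
  fixes P :: "nat \<Rightarrow> nat \<Rightarrow> real"
  assumes prob: "is_prob_seq P"
begin

lemma linV:
  fixes m n :: nat
  shows "lin (Inl ` {..m} \<union> Inr ` {..n}) a x = (\<Sum>i\<le>m. a (Inl i) * x (Inl i)) + (\<Sum>j\<le>n. a (Inr j) * x (Inr j))"
proof -
  have "lin (Inl ` {..m} \<union> Inr ` {..n}) a x = (\<Sum>v\<in>Inl ` {..m}. a v * x v) + (\<Sum>v\<in>Inr ` {..n}. a v * x v)"
    unfolding lin_def by (rule sum.union_disjoint) (simp_all, blast)
  also have "\<dots> = (\<Sum>i\<le>m. a (Inl i) * x (Inl i)) + (\<Sum>j\<le>n. a (Inr j) * x (Inr j))"
    by (simp add: sum.reindex)
  finally show ?thesis .
qed

lemma dual_uv: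
  "\<exists>u v. (\<forall>i\<le>m. \<forall>j\<le>n. u i - v j \<le> dd P i j)
       \<and> dd P (Suc m) (Suc n) \<le> (\<Sum>i\<le>m. P m i * u i) - (\<Sum>j\<le>n. P n j * v j)"
proof (rule ccontr)
  assume nex: "\<not> ?thesis"
  define W where "W = dd P (Suc m) (Suc n)"
  define V :: "(nat + nat) set" where "V = Inl ` {..m} \<union> Inr ` {..n}"
  define obj :: "nat + nat \<Rightarrow> real" where "obj = (\<lambda>x. case x of Inl i \<Rightarrow> - P m i | Inr j \<Rightarrow> P n j)"
  define con where "con = (\<lambda>(i::nat,j::nat). ((\<lambda>x. (if x = Inl i then 1 else 0) - (if x = Inr j then (1::real) else 0)), dd P i j))"
  define C where "C = con ` ({..m} \<times> {..n}) \<union> {(obj, - W)}"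
  have finV: "finite V" by (simp add: V_def)
  have finC: "finite C" by (simp add: C_def)
  have van: "\<forall>c\<in>C. \<forall>x. x \<notin> V \<longrightarrow> fst c x = 0"
  proof (intro ballI allI impI)
    fix c x assume c: "c \<in> C" and x: "x \<notin> V"
    show "fst c x = 0"
    proof (cases x)
      case (Inl i)
      then have "m < i" using x by (auto simp: V_def)
      then show ?thesis using c Inl by (auto simp: C_def con_def obj_def P_zero[OF prob])
    next
      case (Inr j)
      then have "n < j" using x by (auto simp: V_def)
      then show ?thesis using c Inr by (auto simp: C_def con_def obj_def P_zero[OF prob])
    qed
  qed
  have infeas: "\<forall>x. \<exists>c\<in>C. lin V (fst c) x > snd c"
  proof (rule ccontr)
    assume "\<not> ?thesis"
    then obtain x where x: "\<forall>c\<in>C. lin V (fst c) x \<le> snd c" by (auto simp: not_less)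
    define u where "u = (\<lambda>i. x (Inl i))"
    define v where "v = (\<lambda>j. x (Inr j))"
    have "u i - v j \<le> dd P i j" if "i \<le> m" "j \<le> n" for i j
    proof -
      have "con (i,j) \<in> C" using that by (auto simp: C_def)
      then have "lin V (fst (con (i,j))) x \<le> dd P i j" using x by (auto simp: con_def)
      moreover have "lin V (fst (con (i,j))) x = u i - v j"
      proof -
        have "lin V (fst (con (i,j))) x = (\<Sum>i'\<le>m. (if i' = i then x (Inl i') else 0)) + (\<Sum>j'\<le>n. (if j' = j then - x (Inr j') else 0))"
          unfolding V_def linV by (intro arg_cong2[where f="(+)"] sum.cong refl) (auto simp: con_def)
        also have "\<dots> = u i - v j" using that by (simp add: u_def v_def)
        finally show ?thesis .
      qed
      ultimately show ?thesis by simp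
    qed
    moreover have "W \<le> (\<Sum>i\<le>m. P m i * u i) - (\<Sum>j\<le>n. P n j * v j)"
    proof -
      have "lin V obj x \<le> - W" using x by (auto simp: C_def)
      moreover have "lin V obj x = - (\<Sum>i\<le>m. P m i * u i) + (\<Sum>j\<le>n. P n j * v j)"
        unfolding V_def linV by (simp add: obj_def u_def v_def sum_negf)
      ultimately show ?thesis by simp
    qed
    ultimately show False using nex unfolding W_def by blast
  qed
  obtain b where b: "b < 0" "((\<lambda>_. 0), b) \<in> ncone C" using farkas[OF finV finC van infeas] by auto
  define Q where "Q = (\<lambda>c::(nat + nat \<Rightarrow> real) \<times> real. \<exists>z t. (\<forall>i\<le>m. \<forall>j\<le>n. 0 \<le> z i j) \<and> 0 \<le> t
     \<and> (\<forall>i\<le>m. fst c (Inl i) = (\<Sum>j\<le>n. z i j) - t * P m i)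
     \<and> (\<forall>j\<le>n. fst c (Inr j) = t * P n j - (\<Sum>i\<le>m. z i j))
     \<and> snd c = cost P m n z - t * W)"
  have "Q c" if "c \<in> ncone C" for c
    using that
  proof induction
    case (gen c)
    then consider i0 j0 where "i0 \<le> m" "j0 \<le> n" "c = con (i0, j0)" | "c = (obj, - W)"
      by (auto simp: C_def)
    then show ?case
    proof cases
      case 1
      define z where "z = (\<lambda>i j. if i = i0 \<and> j = j0 then (1::real) else 0)"
      have r: "(\<Sum>j\<le>n. z i j) = (if i = i0 then 1 else 0)" for i
        using 1 by (simp add: z_def)
      have cl: "(\<Sum>i\<le>m. z i j) = (if j = j0 then 1 else 0)" for j
        using 1 by (simp add: z_def)
      have co: "cost P m n z = dd P i0 j0"
      proof -
        have "(\<Sum>j\<le>n. z i j * dd P i j) = (if i = i0 then dd P i0 j0 else 0)" for i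
        proof (cases "i = i0")
          case True
          have "(\<Sum>j\<le>n. z i j * dd P i j) = (\<Sum>j\<le>n. if j = j0 then dd P i0 j else 0)"
            using True by (intro sum.cong refl) (auto simp: z_def)
          then show ?thesis using True 1 by simp
        next
          case False then show ?thesis by (simp add: z_def)
        qed
        then have "cost P m n z = (\<Sum>i\<le>m. if i = i0 then dd P i0 j0 else 0)"
          unfolding cost_def by simp
        also have "\<dots> = dd P i0 j0" using 1 by simp
        finally show ?thesis .
      qed
      show ?thesis unfolding Q_def
        by (rule exI[of _ z], rule exI[of _ 0]) (use 1 r cl co in \<open>auto simp: z_def con_def\<close>)
    next
      case 2
      show ?thesis unfolding Q_def
        by (rule exI[of _ "\<lambda>i j. 0"], rule exI[of _ 1]) (use 2 in \<open>auto simp: obj_def cost_def\<close>)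
    qed
  next
    case (add c d)
    then obtain z1 t1 z2 t2 where h1: "(\<forall>i\<le>m. \<forall>j\<le>n. 0 \<le> z1 i j) \<and> 0 \<le> t1
     \<and> (\<forall>i\<le>m. fst c (Inl i) = (\<Sum>j\<le>n. z1 i j) - t1 * P m i)
     \<and> (\<forall>j\<le>n. fst c (Inr j) = t1 * P n j - (\<Sum>i\<le>m. z1 i j))
     \<and> snd c = cost P m n z1 - t1 * W" and h2: "(\<forall>i\<le>m. \<forall>j\<le>n. 0 \<le> z2 i j) \<and> 0 \<le> t2
     \<and> (\<forall>i\<le>m. fst d (Inl i) = (\<Sum>j\<le>n. z2 i j) - t2 * P m i)
     \<and> (\<forall>j\<le>n. fst d (Inr j) = t2 * P n j - (\<Sum>i\<le>m. z2 i j))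
     \<and> snd d = cost P m n z2 - t2 * W" unfolding Q_def by blast
    have cadd: "cost P m n (\<lambda>i j. z1 i j + z2 i j) = cost P m n z1 + cost P m n z2"
      unfolding cost_def by (simp add: distrib_right sum.distrib)
    show ?case unfolding Q_def
      by (rule exI[of _ "\<lambda>i j. z1 i j + z2 i j"], rule exI[of _ "t1 + t2"])
        (use h1 h2 cadd in \<open>auto simp: sum.distrib algebra_simps\<close>)
  next
    case (scale c s)
    then obtain z1 t1 where h1: "(\<forall>i\<le>m. \<forall>j\<le>n. 0 \<le> z1 i j) \<and> 0 \<le> t1
     \<and> (\<forall>i\<le>m. fst c (Inl i) = (\<Sum>j\<le>n. z1 i j) - t1 * P m i)
     \<and> (\<forall>j\<le>n. fst c (Inr j) = t1 * P n j - (\<Sum>i\<le>m. z1 i j))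
     \<and> snd c = cost P m n z1 - t1 * W" unfolding Q_def by blast
    have cs: "cost P m n (\<lambda>i j. s * z1 i j) = s * cost P m n z1"
      unfolding cost_def by (simp add: sum_distrib_left algebra_simps)
    show ?case unfolding Q_def
      by (rule exI[of _ "\<lambda>i j. s * z1 i j"], rule exI[of _ "s * t1"])
        (use h1 cs scale in \<open>auto simp: sum_distrib_left[symmetric] right_diff_distrib mult.assoc\<close>)
  qed
  from this[OF b(2)] obtain z t where z: "\<forall>i\<le>m. \<forall>j\<le>n. 0 \<le> z i j" and t: "0 \<le> t"
    and rows: "\<forall>i\<le>m. 0 = (\<Sum>j\<le>n. z i j) - t * P m i"
    and cols: "\<forall>j\<le>n. 0 = t * P n j - (\<Sum>i\<le>m. z i j)"
    and bz: "b = cost P m n z - t * W" unfolding Q_def by auto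
  show False
  proof (cases "t = 0")
    case True
    have "z i j = 0" if "i \<le> m" "j \<le> n" for i j
    proof -
      have "(\<Sum>j\<le>n. z i j) = 0" using rows True that by simp
      then show ?thesis using sum_nonneg_eq_0_iff[of "{..n}" "z i"] z that by auto
    qed
    then have "cost P m n z = 0" unfolding cost_def by simp
    then show False using bz True b(1) by simp
  next
    case False
    then have tp: "t > 0" using t by simp
    have pl: "(\<lambda>i j. z i j / t) \<in> plans P m n"
      unfolding plans_def using z rows cols tp
    proof (auto simp: sum_divide_distrib[symmetric])
      fix j assume "j \<le> n"
      then have "(\<Sum>i\<le>m. z i j) = t * P n j" using cols by simp
      then show "(\<Sum>i\<le>m. z i j) / t = P n j" using tp by simp
    qed
    have "cost P m n (\<lambda>i j. z i j / t) = cost P m n z / t"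
      unfolding cost_def by (simp add: sum_divide_distrib)
    then have "W \<le> cost P m n z / t" using dd_le[OF prob pl] by (simp add: W_def)
    then have "t * W \<le> cost P m n z" using tp by (simp add: field_simps)
    then show False using bz b(1) by simp
  qed
qed

lemma dual_fun:
  "\<exists>f. (\<forall>k l. f k - f l \<le> dd P k l) \<and> (\<forall>k. 0 \<le> f k \<and> f k \<le> 1)
     \<and> dd P (Suc m) (Suc n) \<le> (\<Sum>i\<le>m. P m i * f i) - (\<Sum>j\<le>n. P n j * f j)"
proof -
  obtain u v where uv: "\<forall>i\<le>m. \<forall>j\<le>n. u i - v j \<le> dd P i j"
    and W: "dd P (Suc m) (Suc n) \<le> (\<Sum>i\<le>m. P m i * u i) - (\<Sum>j\<le>n. P n j * v j)"
    using dual_uv by blast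
  define f0 where "f0 = (\<lambda>k. Min ((\<lambda>j. v j + dd P k j) ` {..n}))"
  define vmin where "vmin = Min (v ` {..n})"
  define f where "f = (\<lambda>k. f0 k - vmin)"
  have f0le: "f0 k \<le> v j + dd P k j" if "j \<le> n" for k j
    unfolding f0_def using that by (intro Min_le) auto
  have f0in: "\<exists>j\<le>n. f0 k = v j + dd P k j" for k
  proof -
    have "f0 k \<in> (\<lambda>j. v j + dd P k j) ` {..n}" unfolding f0_def by (intro Min_in) auto
    then show ?thesis by auto
  qed
  have lip: "f0 k - f0 l \<le> dd P k l" for k l
  proof -
    obtain j where j: "j \<le> n" "f0 l = v j + dd P l j" using f0in by blast
    have "f0 k \<le> v j + dd P k j" using f0le j by simp
    also have "\<dots> \<le> v j + dd P k l + dd P l j" using dd_tri[OF prob, of k j l] by simp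
    finally show ?thesis using j by simp
  qed
  have vj: "f0 j \<le> v j" if "j \<le> n" for j using f0le[OF that, of j] dd_refl[OF prob] by simp
  have ui: "u i \<le> f0 i" if "i \<le> m" for i
  proof -
    obtain j where j: "j \<le> n" "f0 i = v j + dd P i j" using f0in by blast
    then show ?thesis using uv that by force
  qed
  have vmin_le: "vmin \<le> v j" if "j \<le> n" for j unfolding vmin_def using that by (intro Min_le) auto
  obtain j0 where j0: "j0 \<le> n" "vmin = v j0"
  proof -
    have "vmin \<in> v ` {..n}" unfolding vmin_def by (intro Min_in) auto
    then show ?thesis using that by auto
  qed
  have f01: "vmin \<le> f0 k \<and> f0 k \<le> vmin + 1" for k
  proof
    obtain j where j: "j \<le> n" "f0 k = v j + dd P k j" using f0in by blast
    then show "vmin \<le> f0 k" using vmin_le[OF j(1)] dd_nonneg[OF prob, of k j] by simp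
    show "f0 k \<le> vmin + 1" using f0le[OF j0(1), of k] j0 dd_le1[OF prob, of k j0] by simp
  qed
  have sums: "(\<Sum>i\<le>m. P m i * f i) - (\<Sum>j\<le>n. P n j * f j)
      = (\<Sum>i\<le>m. P m i * f0 i) - (\<Sum>j\<le>n. P n j * f0 j)"
    unfolding f_def by (simp add: right_diff_distrib sum_subtractf sum_distrib_right[symmetric] P_sum[OF prob])
  have "(\<Sum>i\<le>m. P m i * u i) \<le> (\<Sum>i\<le>m. P m i * f0 i)"
    by (intro sum_mono mult_left_mono ui) (auto simp: P_nonneg[OF prob])
  moreover have "(\<Sum>j\<le>n. P n j * f0 j) \<le> (\<Sum>j\<le>n. P n j * v j)"
    by (intro sum_mono mult_left_mono vj) (auto simp: P_nonneg[OF prob])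
  ultimately have "dd P (Suc m) (Suc n) \<le> (\<Sum>i\<le>m. P m i * f i) - (\<Sum>j\<le>n. P n j * f j)"
    using W sums by linarith
  moreover have "\<forall>k l. f k - f l \<le> dd P k l" using lip by (simp add: f_def)
  moreover have "\<forall>k. 0 \<le> f k \<and> f k \<le> 1" unfolding f_def using f01 by (smt (verit))
  ultimately show ?thesis by blast
qed

end


lemma Iset_ne: "(0,0) \<in> Iset" by (simp add: Iset_def)

lemma linf_ge:
  assumes "u \<in> cube" "v \<in> cube" "p \<in> Iset"
  shows "\<bar>u p - v p\<bar> \<le> linf_dist u v"
  unfolding linf_dist_def
proof (rule cSUP_upper[OF assms(3)])
  show "bdd_above ((\<lambda>p. \<bar>u p - v p\<bar>) ` Iset)"
    using assms(1,2) by (intro bdd_aboveI[where M=1]) (auto simp: cube_def abs_le_iff, fastforce+)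
qed

lemma linf_le:
  assumes "\<And>p. p \<in> Iset \<Longrightarrow> \<bar>u p - v p\<bar> \<le> r"
  shows "linf_dist u v \<le> r"
  unfolding linf_dist_def using assms Iset_ne by (intro cSUP_least) auto

lemma linf_nonneg: "u \<in> cube \<Longrightarrow> v \<in> cube \<Longrightarrow> 0 \<le> linf_dist u v"
  using linf_ge[OF _ _ Iset_ne] by (meson abs_ge_zero order_trans)

lemma linf_self: "linf_dist u u = 0"
proof -
  have "Iset \<noteq> {}" using Iset_ne by blast
  then show ?thesis unfolding linf_dist_def by simp
qed

lemma linf_tri:
  assumes "u \<in> cube" "v \<in> cube" "w \<in> cube"
  shows "linf_dist u w \<le> linf_dist u v + linf_dist v w"
proof (rule linf_le)
  fix p assume p: "p \<in> Iset"
  have "\<bar>u p - w p\<bar> \<le> \<bar>u p - v p\<bar> + \<bar>v p - w p\<bar>" by simp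
  also have "\<dots> \<le> linf_dist u v + linf_dist v w" using linf_ge[OF _ _ p] assms by (intro add_mono) auto
  finally show "\<bar>u p - w p\<bar> \<le> linf_dist u v + linf_dist v w" .
qed

lemma linf_sym: "linf_dist u v = linf_dist v u"
  unfolding linf_dist_def by (simp add: abs_minus_commute)

definition Gf :: "(nat \<Rightarrow> nat \<Rightarrow> real) \<Rightarrow> nat \<times> nat \<Rightarrow> nat \<Rightarrow> real" where
  "Gf P p = (if fst p = snd p then (\<lambda>k. 1 - dd P k (Suc (fst p)))
     else (SOME f. (\<forall>k l. f k - f l \<le> dd P k l) \<and> (\<forall>k. 0 \<le> f k \<and> f k \<le> 1)
     \<and> dd P (Suc (fst p)) (Suc (snd p)) \<le> (\<Sum>i\<le>fst p. P (fst p) i * f i) - (\<Sum>j\<le>snd p. P (snd p) j * f j)))"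

definition Ys :: "(nat \<Rightarrow> nat \<Rightarrow> real) \<Rightarrow> nat \<Rightarrow> nat \<times> nat \<Rightarrow> real" where
  "Ys P k p = (if p \<in> Iset then Gf P p k else 0)"

definition Xs :: "(nat \<Rightarrow> nat \<Rightarrow> real) \<Rightarrow> nat \<Rightarrow> nat \<times> nat \<Rightarrow> real" where
  "Xs P n = (\<lambda>p. \<Sum>i\<le>n. P n i * Ys P i p)"

definition Tm :: "(nat \<Rightarrow> nat \<Rightarrow> real) \<Rightarrow> (nat \<times> nat \<Rightarrow> real) \<Rightarrow> nat \<times> nat \<Rightarrow> real" where
  "Tm P u = (\<lambda>p. if p \<in> Iset then max 0 (min 1 (Inf (range (\<lambda>n. Ys P (Suc n) p + linf_dist u (Xs P n))))) else 0)"

context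
  fixes P :: "nat \<Rightarrow> nat \<Rightarrow> real"
  assumes prob: "is_prob_seq P"
begin

lemma Gf_props: "(\<forall>k l. Gf P p k - Gf P p l \<le> dd P k l) \<and> (\<forall>k. 0 \<le> Gf P p k \<and> Gf P p k \<le> 1)
   \<and> (fst p \<noteq> snd p \<longrightarrow> dd P (Suc (fst p)) (Suc (snd p)) \<le> (\<Sum>i\<le>fst p. P (fst p) i * Gf P p i) - (\<Sum>j\<le>snd p. P (snd p) j * Gf P p j))"
proof (cases "fst p = snd p")
  case True
  have "(1 - dd P k c) - (1 - dd P l c) \<le> dd P k l" for k l c
    using dd_tri[OF prob, of l c k] dd_sym[OF prob, of l k] by simp
  then show ?thesis using True dd_nonneg[OF prob] dd_le1[OF prob] by (auto simp: Gf_def)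
next
  case False
  then show ?thesis unfolding Gf_def using someI_ex[OF dual_fun[OF prob, of "fst p" "snd p"]] by simp
qed

lemma Gf_abs: "\<bar>Gf P p k - Gf P p l\<bar> \<le> dd P k l"
proof -
  have "Gf P p k - Gf P p l \<le> dd P k l" "Gf P p l - Gf P p k \<le> dd P l k" using Gf_props[of p] by auto
  then show ?thesis using dd_sym[OF prob, of k l] by (simp add: abs_le_iff)
qed

lemma Ys_abs: "\<bar>Ys P k p - Ys P l p\<bar> \<le> dd P k l"
  using Gf_abs dd_nonneg[OF prob] by (simp add: Ys_def)

lemma Ys_cube: "Ys P k \<in> cube"
  using Gf_props by (auto simp: Ys_def cube_def)

lemma Xs_cube: "Xs P n \<in> cube"
proof -
  have "0 \<le> Xs P n p \<and> Xs P n p \<le> 1" for p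
  proof
    show "0 \<le> Xs P n p" unfolding Xs_def using Ys_cube
      by (intro sum_nonneg mult_nonneg_nonneg) (auto simp: P_nonneg[OF prob] cube_def Ys_def Gf_props)
    have "Xs P n p \<le> (\<Sum>i\<le>n. P n i * 1)" unfolding Xs_def
      by (intro sum_mono mult_left_mono) (auto simp: P_nonneg[OF prob] Ys_def Gf_props)
    then show "Xs P n p \<le> 1" by (simp add: P_sum[OF prob])
  qed
  moreover have "p \<notin> Iset \<Longrightarrow> Xs P n p = 0" for p by (simp add: Xs_def Ys_def)
  ultimately show ?thesis by (auto simp: cube_def)
qed

lemma transport_bound:
  assumes g: "\<And>k l. \<bar>g k - g l\<bar> \<le> dd P k l"
  shows "\<bar>(\<Sum>i\<le>m. P m i * g i) - (\<Sum>j\<le>n. P n j * g j)\<bar> \<le> dd P (Suc m) (Suc n)"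
proof (rule dd_ge[OF prob])
  fix z assume z: "z \<in> plans P m n"
  have a: "(\<Sum>i\<le>m. P m i * g i) = (\<Sum>i\<le>m. \<Sum>j\<le>n. z i j * g i)"
    using z by (auto simp: plans_def sum_distrib_right[symmetric] intro!: sum.cong)
  have b: "(\<Sum>j\<le>n. P n j * g j) = (\<Sum>i\<le>m. \<Sum>j\<le>n. z i j * g j)"
    using z by (subst sum.swap) (auto simp: plans_def sum_distrib_right[symmetric] intro!: sum.cong)
  have "\<bar>(\<Sum>i\<le>m. P m i * g i) - (\<Sum>j\<le>n. P n j * g j)\<bar> = \<bar>\<Sum>i\<le>m. \<Sum>j\<le>n. z i j * (g i - g j)\<bar>"
    unfolding a b by (simp add: sum_subtractf right_diff_distrib)
  also have "\<dots> \<le> (\<Sum>i\<le>m. \<Sum>j\<le>n. \<bar>z i j * (g i - g j)\<bar>)"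
    by (rule order_trans[OF sum_abs]) (intro sum_mono sum_abs)
  also have "\<dots> \<le> cost P m n z" unfolding cost_def using z g
    by (intro sum_mono) (auto simp: plans_def abs_mult intro!: mult_left_mono)
  finally show "\<bar>(\<Sum>i\<le>m. P m i * g i) - (\<Sum>j\<le>n. P n j * g j)\<bar> \<le> cost P m n z" .
qed

lemma Xs_dist: "linf_dist (Xs P m) (Xs P n) = dd P (Suc m) (Suc n)"
proof (rule antisym)
  show "linf_dist (Xs P m) (Xs P n) \<le> dd P (Suc m) (Suc n)"
  proof (rule linf_le)
    fix p assume "p \<in> Iset"
    show "\<bar>Xs P m p - Xs P n p\<bar> \<le> dd P (Suc m) (Suc n)"
      unfolding Xs_def by (rule transport_bound) (rule Ys_abs)
  qed
next
  show "dd P (Suc m) (Suc n) \<le> linf_dist (Xs P m) (Xs P n)"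
  proof (cases m n rule: linorder_cases)
    case less
    have p: "(m, n) \<in> Iset" using less by (simp add: Iset_def)
    have "dd P (Suc m) (Suc n) \<le> Xs P m (m,n) - Xs P n (m,n)"
      using Gf_props[of "(m,n)"] less p by (simp add: Xs_def Ys_def)
    also have "\<dots> \<le> linf_dist (Xs P m) (Xs P n)"
      using linf_ge[OF Xs_cube[of m] Xs_cube[of n] p] by simp
    finally show ?thesis .
  next
    case equal
    then show ?thesis using dd_refl[OF prob, of "Suc n"] linf_nonneg[OF Xs_cube Xs_cube] by (simp del: dd.simps)
  next
    case greater
    have p: "(n, m) \<in> Iset" using greater by (simp add: Iset_def)
    have "dd P (Suc n) (Suc m) \<le> Xs P n (n,m) - Xs P m (n,m)"
      using Gf_props[of "(n,m)"] greater p by (simp add: Xs_def Ys_def)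
    also have "\<dots> \<le> linf_dist (Xs P m) (Xs P n)"
      using linf_ge[OF Xs_cube[of n] Xs_cube[of m] p] linf_sym by simp
    finally show ?thesis using dd_sym[OF prob, of "Suc n" "Suc m"] by (simp del: dd.simps)
  qed
qed

lemma Xs_R: "linf_dist (Xs P n) (Ys P (Suc n)) = (\<Sum>i\<le>n. P n i * dd P i (Suc n))"
proof (rule antisym)
  show "linf_dist (Xs P n) (Ys P (Suc n)) \<le> (\<Sum>i\<le>n. P n i * dd P i (Suc n))"
  proof (rule linf_le)
    fix p assume "p \<in> Iset"
    have "\<bar>Xs P n p - Ys P (Suc n) p\<bar> = \<bar>\<Sum>i\<le>n. P n i * (Ys P i p - Ys P (Suc n) p)\<bar>"
      by (simp add: Xs_def right_diff_distrib sum_subtractf sum_distrib_right[symmetric] P_sum[OF prob])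
    also have "\<dots> \<le> (\<Sum>i\<le>n. \<bar>P n i * (Ys P i p - Ys P (Suc n) p)\<bar>)" by (rule sum_abs)
    also have "\<dots> \<le> (\<Sum>i\<le>n. P n i * dd P i (Suc n))"
      by (intro sum_mono) (auto simp: abs_mult P_nonneg[OF prob] intro!: mult_left_mono Ys_abs)
    finally show "\<bar>Xs P n p - Ys P (Suc n) p\<bar> \<le> (\<Sum>i\<le>n. P n i * dd P i (Suc n))" .
  qed
next
  have p: "(n, n) \<in> Iset" by (simp add: Iset_def)
  have "Ys P (Suc n) (n,n) - Xs P n (n,n) = 1 - (\<Sum>i\<le>n. P n i * (1 - dd P i (Suc n)))"
  proof -
    have g: "Gf P (n,n) k = 1 - dd P k (Suc n)" for k by (simp add: Gf_def)
    have "dd P (Suc n) (Suc n) = 0" by (rule dd_refl[OF prob])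
    then show ?thesis using p by (simp add: Xs_def Ys_def g del: dd.simps)
  qed
  also have "\<dots> = (\<Sum>i\<le>n. P n i * dd P i (Suc n))"
    by (simp add: right_diff_distrib sum_subtractf P_sum[OF prob])
  finally have "(\<Sum>i\<le>n. P n i * dd P i (Suc n)) = Ys P (Suc n) (n,n) - Xs P n (n,n)" by simp
  also have "\<dots> \<le> linf_dist (Xs P n) (Ys P (Suc n))"
    using linf_ge[OF Xs_cube[of n] Ys_cube[of "Suc n"] p] by simp
  finally show "(\<Sum>i\<le>n. P n i * dd P i (Suc n)) \<le> linf_dist (Xs P n) (Ys P (Suc n))" .
qed

end


lemma clamp_lip: "\<bar>max 0 (min 1 a) - max 0 (min 1 b)\<bar> \<le> \<bar>(a::real) - b\<bar>"
  by (simp add: abs_le_iff max_def min_def) linarith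

lemma Tm_cube: "Tm P u \<in> cube"
  by (auto simp: Tm_def cube_def)

context
  fixes P :: "nat \<Rightarrow> nat \<Rightarrow> real"
  assumes prob: "is_prob_seq P"
begin

lemma Ys_nonneg: "0 \<le> Ys P k p"
  using Gf_props[OF prob, of p] by (auto simp: Ys_def)

lemma term_bdd: "u \<in> cube \<Longrightarrow> bdd_below (range (\<lambda>n. Ys P (Suc n) p + linf_dist u (Xs P n)))"
  by (intro bdd_belowI[where m=0]) (auto intro!: add_nonneg_nonneg Ys_nonneg linf_nonneg Xs_cube[OF prob])

lemma Inf_shift:
  assumes u: "u \<in> cube" and v: "v \<in> cube"
  shows "Inf (range (\<lambda>n. Ys P (Suc n) p + linf_dist u (Xs P n))) - linf_dist u v
       \<le> Inf (range (\<lambda>n. Ys P (Suc n) p + linf_dist v (Xs P n)))"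
proof (rule cInf_greatest)
  show "range (\<lambda>n. Ys P (Suc n) p + linf_dist v (Xs P n)) \<noteq> {}" by simp
next
  fix y assume "y \<in> range (\<lambda>n. Ys P (Suc n) p + linf_dist v (Xs P n))"
  then obtain n where y: "y = Ys P (Suc n) p + linf_dist v (Xs P n)" by auto
  have "Inf (range (\<lambda>n. Ys P (Suc n) p + linf_dist u (Xs P n))) \<le> Ys P (Suc n) p + linf_dist u (Xs P n)"
    by (rule cInf_lower) (auto intro: term_bdd[OF u])
  also have "\<dots> \<le> Ys P (Suc n) p + linf_dist u v + linf_dist v (Xs P n)"
    using linf_tri[OF u v Xs_cube[OF prob, of n]] by simp
  finally show "Inf (range (\<lambda>n. Ys P (Suc n) p + linf_dist u (Xs P n))) - linf_dist u v \<le> y"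
    using y by simp
qed

lemma Tm_nonexp:
  assumes u: "u \<in> cube" and v: "v \<in> cube"
  shows "linf_dist (Tm P u) (Tm P v) \<le> linf_dist u v"
proof (rule linf_le)
  fix p assume p: "p \<in> Iset"
  let ?a = "Inf (range (\<lambda>n. Ys P (Suc n) p + linf_dist u (Xs P n)))"
  let ?b = "Inf (range (\<lambda>n. Ys P (Suc n) p + linf_dist v (Xs P n)))"
  have "\<bar>?a - ?b\<bar> \<le> linf_dist u v"
    using Inf_shift[OF u v, of p] Inf_shift[OF v u, of p] linf_sym[of u v] by (simp add: abs_le_iff)
  then show "\<bar>Tm P u p - Tm P v p\<bar> \<le> linf_dist u v"
    using clamp_lip[of ?a ?b] p by (simp add: Tm_def)
qed

lemma Tm_Xs: "Tm P (Xs P k) = Ys P (Suc k)"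
proof
  fix p
  show "Tm P (Xs P k) p = Ys P (Suc k) p"
  proof (cases "p \<in> Iset")
    case False then show ?thesis by (simp add: Tm_def Ys_def)
  next
    case True
    let ?I = "Inf (range (\<lambda>n. Ys P (Suc n) p + linf_dist (Xs P k) (Xs P n)))"
    have "?I \<le> Ys P (Suc k) p + linf_dist (Xs P k) (Xs P k)"
      by (rule cInf_lower) (auto intro: term_bdd[OF Xs_cube[OF prob]])
    then have le: "?I \<le> Ys P (Suc k) p" by (simp add: linf_self)
    have ge: "Ys P (Suc k) p \<le> ?I"
    proof (rule cInf_greatest)
      show "range (\<lambda>n. Ys P (Suc n) p + linf_dist (Xs P k) (Xs P n)) \<noteq> {}" by simp
    next
      fix y assume "y \<in> range (\<lambda>n. Ys P (Suc n) p + linf_dist (Xs P k) (Xs P n))"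
      then obtain n where y: "y = Ys P (Suc n) p + linf_dist (Xs P k) (Xs P n)" by auto
      have "\<bar>Ys P (Suc k) p - Ys P (Suc n) p\<bar> \<le> dd P (Suc k) (Suc n)" by (rule Ys_abs[OF prob])
      then show "Ys P (Suc k) p \<le> y" using y Xs_dist[OF prob, of k n] by (simp del: dd.simps add: abs_le_iff)
    qed
    have "?I = Ys P (Suc k) p" using le ge by simp
    moreover have "0 \<le> Ys P (Suc k) p \<and> Ys P (Suc k) p \<le> 1" using Ys_cube[OF prob, of "Suc k"] True
      by (auto simp: cube_def)
    ultimately show ?thesis using True by (simp add: Tm_def)
  qed
qed

end

theorem theorem3:
  fixes P :: "nat \<Rightarrow> nat \<Rightarrow> real"
  assumes "is_prob_seq P"
  shows "\<exists>T y0 (x :: nat \<Rightarrow> nat \<times> nat \<Rightarrow> real).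
           T ` cube \<subseteq> cube
         \<and> (\<forall>u\<in>cube. \<forall>v\<in>cube. linf_dist (T u) (T v) \<le> linf_dist u v)
         \<and> y0 \<in> cube \<and> (\<forall>n. x n \<in> cube)
         \<and> (\<forall>n\<ge>1. x n = (\<lambda>p. \<Sum>i\<le>n. P n i * (if i = 0 then y0 p else T (x (i - 1)) p)))
         \<and> (\<forall>m n. linf_dist (x m) (x n) = d P (int m) (int n))
         \<and> (condH P \<longrightarrow>
              (\<forall>n. linf_dist (x n) (T (x n)) = (\<Sum>i\<le>n. P n i * d P (int i - 1) (int n))))"
proof (intro exI conjI)
  let ?T = "Tm P" and ?y = "Ys P 0" and ?x = "Xs P"
  show "?T ` cube \<subseteq> cube" using Tm_cube by blast
  show "\<forall>u\<in>cube. \<forall>v\<in>cube. linf_dist (?T u) (?T v) \<le> linf_dist u v"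
    using Tm_nonexp[OF assms] by blast
  show "?y \<in> cube" by (rule Ys_cube[OF assms])
  show "\<forall>n. ?x n \<in> cube" using Xs_cube[OF assms] by blast
  show "\<forall>n\<ge>1. ?x n = (\<lambda>p. \<Sum>i\<le>n. P n i * (if i = 0 then ?y p else ?T (?x (i - 1)) p))"
  proof (intro allI impI ext)
    fix n p
    have "(if i = 0 then ?y p else ?T (?x (i - 1)) p) = Ys P i p" for i
      using Tm_Xs[OF assms, of "i - 1"] by (cases i) auto
    then show "?x n p = (\<Sum>i\<le>n. P n i * (if i = 0 then ?y p else ?T (?x (i - 1)) p))"
      by (simp add: Xs_def)
  qed
  have nat1: "nat (int m + 1) = Suc m" for m by simp
  show "\<forall>m n. linf_dist (?x m) (?x n) = d P (int m) (int n)"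
    using Xs_dist[OF assms] by (simp add: d_def nat1 del: dd.simps)
  show "condH P \<longrightarrow> (\<forall>n. linf_dist (?x n) (?T (?x n)) = (\<Sum>i\<le>n. P n i * d P (int i - 1) (int n)))"
    using Xs_R[OF assms] Tm_Xs[OF assms] by (simp add: d_def nat1 del: dd.simps)
qed



end
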